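(* Let $G$ be a $(C_4,\text{diamond})$-free graph and $1\le k\le |V(G)|-1$. Let $e=ab$ be an edge of $G$ such that $G\setminus\{a,b\}$ is connected. Then the set of edges $AB$ of $F_k(G)$ with $A\triangle B=\{a,b\}$ forms a ladder class of $F_k(G)$.
   Context: $F_k(G)$ is the graph on the $k$-subsets of $V(G)$ with $A,B$ adjacent iff $A\triangle B$ is an edge of $G$. A diamond is $K_4$ minus an edge; $(C_4,\text{diamond})$-free means no induced $4$-cycle and no induced diamond. A ladder is a graph isomorphic to $K_2\square P_m$, $m\ge1$ (with $K_2$ on $\{x,y\}$ and $P_m$ the path $v_1\cdots v_{m+1}$); for $m\ge2$ its rungs are the edges $(x,v_i)(y,v_i)$, and for $m=1$ the rungs may be either pair of disjoint edges. Two edges of a graph $F$ are connected by a ladder if some induced subgraph of $F$ isomorphic to a ladder has them as rungs; the ladder classes are the equivalence classes of the (smallest equivalence relation containing) this relation on $E(F)$. *)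

theory Defs
  imports Main
begin

definition simple_graph :: "'a set \<Rightarrow> 'a set set \<Rightarrow> bool" where
  "simple_graph V E \<longleftrightarrow> finite V \<and> (\<forall>e\<in>E. e \<subseteq> V \<and> card e = 2)"

definition symdiff :: "'a set \<Rightarrow> 'a set \<Rightarrow> 'a set" where
  "symdiff A B = (A - B) \<union> (B - A)"

definition token_V :: "'a set \<Rightarrow> nat \<Rightarrow> 'a set set" where
  "token_V V k = {A. A \<subseteq> V \<and> card A = k}"

definition token_E :: "'a set \<Rightarrow> 'a set set \<Rightarrow> nat \<Rightarrow> 'a set set set" where
  "token_E V E k = {{A, B} | A B. A \<in> token_V V k \<and> B \<in> token_V V k \<and> symdiff A B \<in> E}"

definition induced_E :: "'a set set \<Rightarrow> 'a set \<Rightarrow> 'a set set" where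
  "induced_E E S = {e \<in> E. e \<subseteq> S}"

definition connected_graph :: "'a set \<Rightarrow> 'a set set \<Rightarrow> bool" where
  "connected_graph V E \<longleftrightarrow>
     (\<forall>u\<in>V. \<forall>v\<in>V. (u, v) \<in> {(x, y). {x, y} \<in> E}\<^sup>*)"

definition C4_free :: "'a set \<Rightarrow> 'a set set \<Rightarrow> bool" where
  "C4_free V E \<longleftrightarrow> \<not> (\<exists>a\<in>V. \<exists>b\<in>V. \<exists>c\<in>V. \<exists>d\<in>V. distinct [a, b, c, d] \<and>
      {a, b} \<in> E \<and> {b, c} \<in> E \<and> {c, d} \<in> E \<and> {d, a} \<in> E \<and>
      {a, c} \<notin> E \<and> {b, d} \<notin> E)"

definition diamond_free :: "'a set \<Rightarrow> 'a set set \<Rightarrow> bool" where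
  "diamond_free V E \<longleftrightarrow> \<not> (\<exists>a\<in>V. \<exists>b\<in>V. \<exists>c\<in>V. \<exists>d\<in>V. distinct [a, b, c, d] \<and>
      {a, b} \<in> E \<and> {b, c} \<in> E \<and> {c, d} \<in> E \<and> {d, a} \<in> E \<and>
      {a, c} \<in> E \<and> {b, d} \<notin> E)"

(* Ladder K_2 \<box> P_m: vertices (s, i) with s :: bool (the K_2 = {x,y}), 0 \<le> i \<le> m
   (path v_0 ... v_m, i.e. m+1 vertices). *)
definition ladder_verts :: "nat \<Rightarrow> (bool \<times> nat) set" where
  "ladder_verts m = UNIV \<times> {0..m}"

definition ladder_adj :: "(bool \<times> nat) \<Rightarrow> (bool \<times> nat) \<Rightarrow> bool" where
  "ladder_adj u v \<longleftrightarrow> (snd u = snd v \<and> fst u \<noteq> fst v) \<or>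
                       (fst u = fst v \<and> (snd v = Suc (snd u) \<or> snd u = Suc (snd v)))"

definition induced_ladder :: "'a set \<Rightarrow> 'a set set \<Rightarrow> nat \<Rightarrow> (bool \<times> nat \<Rightarrow> 'a) \<Rightarrow> bool" where
  "induced_ladder V E m \<phi> \<longleftrightarrow> 1 \<le> m \<and> inj_on \<phi> (ladder_verts m) \<and> \<phi> ` ladder_verts m \<subseteq> V \<and>
     (\<forall>u\<in>ladder_verts m. \<forall>v\<in>ladder_verts m. {\<phi> u, \<phi> v} \<in> E \<longleftrightarrow> ladder_adj u v)"

definition ladder_rungs :: "nat \<Rightarrow> (bool \<times> nat \<Rightarrow> 'a) \<Rightarrow> 'a set set" where
  "ladder_rungs m \<phi> = {{\<phi> (False, i), \<phi> (True, i)} | i. i \<le> m}"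

(* for m = 1 the alternative choice of rungs: the other pair of disjoint edges of the 4-cycle *)
definition ladder_alt_rungs :: "(bool \<times> nat \<Rightarrow> 'a) \<Rightarrow> 'a set set" where
  "ladder_alt_rungs \<phi> = {{\<phi> (False, 0), \<phi> (False, 1)}, {\<phi> (True, 0), \<phi> (True, 1)}}"

definition connected_by_ladder :: "'a set \<Rightarrow> 'a set set \<Rightarrow> 'a set \<Rightarrow> 'a set \<Rightarrow> bool" where
  "connected_by_ladder V E e1 e2 \<longleftrightarrow>
     (\<exists>m \<phi>. induced_ladder V E m \<phi> \<and>
        ((e1 \<in> ladder_rungs m \<phi> \<and> e2 \<in> ladder_rungs m \<phi>) \<or>
         (m = 1 \<and> e1 \<in> ladder_alt_rungs \<phi> \<and> e2 \<in> ladder_alt_rungs \<phi>)))"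

definition ladder_rel :: "'a set \<Rightarrow> 'a set set \<Rightarrow> ('a set \<times> 'a set) set" where
  "ladder_rel V E = {(e1, e2). e1 \<in> E \<and> e2 \<in> E \<and> connected_by_ladder V E e1 e2}"

definition ladder_equiv :: "'a set \<Rightarrow> 'a set set \<Rightarrow> ('a set \<times> 'a set) set" where
  "ladder_equiv V E = Id_on E \<union> (ladder_rel V E \<union> (ladder_rel V E)\<inverse>)\<^sup>+"

definition ladder_classes :: "'a set \<Rightarrow> 'a set set \<Rightarrow> 'a set set set" where
  "ladder_classes V E = E // ladder_equiv V E"

end

theory Submission
  imports Defs
begin

lemma K:
  assumes "z\<noteq>w" "p\<noteq>q" "u\<noteq>r" "symdiff {z,w} {p,q} = {u,r}"
  shows "\<exists>t. t\<noteq>u \<and> t\<noteq>r \<and> (({z,w}={u,t} \<and> {p,q}={t,r}) \<or> ({z,w}={r,t} \<and> {p,q}={t,u}))"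
proof -
  have H: "\<And>x. (((x=z \<or> x=w) \<and> x\<noteq>p \<and> x\<noteq>q) \<or> ((x=p \<or> x=q) \<and> x\<noteq>z \<and> x\<noteq>w)) \<longleftrightarrow> x=u \<or> x=r"
    using assms(4) unfolding symdiff_def set_eq_iff by auto
  note h = H[of z] H[of w] H[of p] H[of q] H[of u] H[of r]
  consider "z=p" | "z=q" | "w=p" | "w=q" | "z\<noteq>p \<and> z\<noteq>q \<and> w\<noteq>p \<and> w\<noteq>q" by blast
  then show ?thesis
  proof cases
    case 1
    then have "z\<noteq>u \<and> z\<noteq>r \<and> (({z,w}={u,z} \<and> {p,q}={z,r}) \<or> ({z,w}={r,z} \<and> {p,q}={z,u}))"
      using h assms(1-3) by (auto simp: insert_commute)
    then show ?thesis by blast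
  next
    case 2
    then have "z\<noteq>u \<and> z\<noteq>r \<and> (({z,w}={u,z} \<and> {p,q}={z,r}) \<or> ({z,w}={r,z} \<and> {p,q}={z,u}))"
      using h assms(1-3) by (auto simp: insert_commute)
    then show ?thesis by blast
  next
    case 3
    then have "w\<noteq>u \<and> w\<noteq>r \<and> (({z,w}={u,w} \<and> {p,q}={w,r}) \<or> ({z,w}={r,w} \<and> {p,q}={w,u}))"
      using h assms(1-3) by (auto simp: insert_commute)
    then show ?thesis by blast
  next
    case 4
    then have "w\<noteq>u \<and> w\<noteq>r \<and> (({z,w}={u,w} \<and> {p,q}={w,r}) \<or> ({z,w}={r,w} \<and> {p,q}={w,u}))"
      using h assms(1-3) by (auto simp: insert_commute)
    then show ?thesis by blast
  next
    case 5
    then show ?thesis using h assms(1-3) by auto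
  qed
qed

lemma K4:
  assumes "z\<noteq>w" "p\<noteq>q" "distinct [u,v,x,y]" "symdiff {z,w} {p,q} = {u,v,x,y}"
  shows "({z,w}={u,v} \<and> {p,q}={x,y}) \<or> ({z,w}={x,y} \<and> {p,q}={u,v}) \<or>
   ({z,w}={u,x} \<and> {p,q}={v,y}) \<or> ({z,w}={v,y} \<and> {p,q}={u,x}) \<or>
   ({z,w}={u,y} \<and> {p,q}={v,x}) \<or> ({z,w}={v,x} \<and> {p,q}={u,y})"
proof -
  have H: "\<And>t. (((t=z \<or> t=w) \<and> t\<noteq>p \<and> t\<noteq>q) \<or> ((t=p \<or> t=q) \<and> t\<noteq>z \<and> t\<noteq>w)) \<longleftrightarrow> t=u \<or> t=v \<or> t=x \<or> t=y"
    using assms(4) unfolding symdiff_def set_eq_iff by auto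
  note h = H[of z] H[of w] H[of p] H[of q] H[of u] H[of v] H[of x] H[of y]
  have d: "distinct [z,w,p,q]" using h assms(1-3) by auto
  have zz: "z=u \<or> z=v \<or> z=x \<or> z=y" "w=u \<or> w=v \<or> w=x \<or> w=y"
     "p=u \<or> p=v \<or> p=x \<or> p=y" "q=u \<or> q=v \<or> q=x \<or> q=y" using h d by auto
  show ?thesis using zz d assms(3) by (auto simp: insert_commute)
qed

lemma two_shapes:
  assumes "u\<noteq>v" "x\<noteq>y" "{u,v}\<noteq>{x,y}"
  shows "(\<exists>s t r. distinct [s,t,r] \<and> {u,v}={s,t} \<and> {x,y}={t,r}) \<or> distinct [u,v,x,y]"
proof (cases "u=x \<or> u=y \<or> v=x \<or> v=y")
  case True
  then consider "u=x" | "u=y" | "v=x" | "v=y" by blast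
  then show ?thesis
  proof cases
    case 1 then have "distinct [v,u,y] \<and> {u,v}={v,u} \<and> {x,y}={u,y}" using assms by (auto simp: insert_commute)
    then show ?thesis by blast
  next
    case 2 then have "distinct [v,u,x] \<and> {u,v}={v,u} \<and> {x,y}={u,x}" using assms by (auto simp: insert_commute)
    then show ?thesis by blast
  next
    case 3 then have "distinct [u,v,y] \<and> {u,v}={u,v} \<and> {x,y}={v,y}" using assms by (auto simp: insert_commute)
    then show ?thesis by blast
  next
    case 4 then have "distinct [u,v,x] \<and> {u,v}={u,v} \<and> {x,y}={v,x}" using assms by (auto simp: insert_commute)
    then show ?thesis by blast
  qed
next
  case False
  then show ?thesis using assms by auto
qed

lemma four_labels:
  assumes sq: "\<And>a b c d. distinct [a,b,c,d] \<Longrightarrow> {a,b}\<in>E \<Longrightarrow> {b,c}\<in>E \<Longrightarrow> {c,d}\<in>E \<Longrightarrow> {d,a}\<in>E \<Longrightarrow> {a,c}\<in>E"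
    and c2: "\<forall>e\<in>E. card e = 2"
    and E: "e1\<in>E" "e2\<in>E" "e3\<in>E" "e4\<in>E"
    and ne: "e1\<noteq>e2" "e2\<noteq>e3"
    and sd: "symdiff e1 e2 = symdiff e3 e4" "symdiff e1 e2 \<notin> E" "symdiff e2 e3 \<notin> E"
  shows "e1 = e3"
proof -
  obtain u v where 1: "e1={u,v}" "u\<noteq>v" using c2 E(1) by (meson card_2_iff)
  obtain x y where 2: "e2={x,y}" "x\<noteq>y" using c2 E(2) by (meson card_2_iff)
  obtain z w where 3: "e3={z,w}" "z\<noteq>w" using c2 E(3) by (meson card_2_iff)
  obtain p q where 4: "e4={p,q}" "p\<noteq>q" using c2 E(4) by (meson card_2_iff)
  from two_shapes[OF 1(2) 2(2)] ne 1 2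
  consider (sh) s t r where "distinct [s,t,r]" "e1={s,t}" "e2={t,r}" | (dj) "distinct [u,v,x,y]"
    by blast
  then show ?thesis
  proof cases
    case sh
    have D: "symdiff e1 e2 = {s,r}" using sh unfolding symdiff_def by auto
    have nE: "{s,r}\<notin>E" using D sd by simp
    have s_ne: "s\<noteq>r" using sh by auto
    from K[OF 3(2) 4(2) s_ne] sd(1) D 3 4
    obtain t' where t': "t'\<noteq>s" "t'\<noteq>r" "(e3={s,t'} \<and> e4={t',r}) \<or> (e3={r,t'} \<and> e4={t',s})"
      by auto
    show ?thesis
    proof (cases "t'=t")
      case True
      then show ?thesis using t' sh ne by (auto simp: insert_commute)
    next
      case False
      have dd: "distinct [s,t,r,t']" using sh t' False by auto
      have "{s,r}\<in>E"
      proof (rule sq[OF dd])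
        show "{s,t}\<in>E" "{t,r}\<in>E" using sh E by auto
        show "{r,t'}\<in>E" "{t',s}\<in>E" using t' E by (auto simp: insert_commute)
      qed
      then show ?thesis using nE by simp
    qed
  next
    case dj
    have D4: "symdiff e1 e2 = {u,v,x,y}" using 1 2 dj unfolding symdiff_def by auto
    have D4': "symdiff {z,w} {p,q} = {u,v,x,y}" using D4 sd(1) 3 4 by simp
    from K4[OF 3(2) 4(2) dj D4'] 3 4
    have c: "(e3={u,v} \<and> e4={x,y}) \<or> (e3={x,y} \<and> e4={u,v}) \<or>
     (e3={u,x} \<and> e4={v,y}) \<or> (e3={v,y} \<and> e4={u,x}) \<or>
     (e3={u,y} \<and> e4={v,x}) \<or> (e3={v,x} \<and> e4={u,y})"
      by simp
    have Euv: "{u,v}\<in>E" "{x,y}\<in>E" using 1 2 E by auto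
    show ?thesis
    proof -
      have False if "e3={u,x}" "e4={v,y}"
      proof -
        have "symdiff e2 e3 = {y,u}" using that 2 dj unfolding symdiff_def by auto
        moreover have "{u,y}\<in>E"
        proof (rule sq)
          show "distinct [u,v,y,x]" using dj by auto
          show "{u,v}\<in>E" "{v,y}\<in>E" "{y,x}\<in>E" "{x,u}\<in>E"
            using Euv E(3,4) that by (simp_all add: insert_commute)
        qed
        ultimately show False using sd(3) by (simp add: insert_commute)
      qed
      moreover have False if "e3={v,y}" "e4={u,x}"
      proof -
        have "symdiff e2 e3 = {x,v}" using that 2 dj unfolding symdiff_def by auto
        moreover have "{v,x}\<in>E"
        proof (rule sq)
          show "distinct [v,u,x,y]" using dj by auto
          show "{v,u}\<in>E" "{u,x}\<in>E" "{x,y}\<in>E" "{y,v}\<in>E"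
            using Euv E(3,4) that by (simp_all add: insert_commute)
        qed
        ultimately show False using sd(3) by (simp add: insert_commute)
      qed
      moreover have False if "e3={u,y}" "e4={v,x}"
      proof -
        have "symdiff e2 e3 = {x,u}" using that 2 dj unfolding symdiff_def by auto
        moreover have "{u,x}\<in>E"
        proof (rule sq)
          show "distinct [u,v,x,y]" using dj by auto
          show "{u,v}\<in>E" "{v,x}\<in>E" "{x,y}\<in>E" "{y,u}\<in>E"
            using Euv E(3,4) that by (simp_all add: insert_commute)
        qed
        ultimately show False using sd(3) by (simp add: insert_commute)
      qed
      moreover have False if "e3={v,x}" "e4={u,y}"
      proof -
        have "symdiff e2 e3 = {y,v}" using that 2 dj unfolding symdiff_def by auto
        moreover have "{v,y}\<in>E"
        proof (rule sq)
          show "distinct [v,u,y,x]" using dj by auto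
          show "{v,u}\<in>E" "{u,y}\<in>E" "{y,x}\<in>E" "{x,v}\<in>E"
            using Euv E(3,4) that by (simp_all add: insert_commute)
        qed
        ultimately show False using sd(3) by (simp add: insert_commute)
      qed
      note ff = calculation this
      from c show ?thesis
      proof (elim disjE conjE)
        show "e1 = e3" if "e3={u,v}" "e4={x,y}" using that 1 by simp
        show "e1 = e3" if "e3={x,y}" "e4={u,v}" using that 2 ne(2) by simp
        show "e1 = e3" if "e3={u,x}" "e4={v,y}" using ff(1)[OF that] by blast
        show "e1 = e3" if "e3={v,y}" "e4={u,x}" using ff(2)[OF that] by blast
        show "e1 = e3" if "e3={u,y}" "e4={v,x}" using ff(3)[OF that] by blast
        show "e1 = e3" if "e3={v,x}" "e4={u,y}" using ff(4)[OF that] by blast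
      qed
    qed
  qed
qed

lemma sd_comm: "symdiff A B = symdiff B A" unfolding symdiff_def by auto
lemma sd_trans: "symdiff (symdiff P Q) (symdiff Q R) = symdiff P R" unfolding symdiff_def by auto
lemma sd_empty: "symdiff A B = {} \<longleftrightarrow> A = B" unfolding symdiff_def by auto

definition lab :: "'a set set \<Rightarrow> 'a set" where "lab e = \<Union>e - \<Inter>e"
lemma lab_pair: "lab {A,B} = symdiff A B" unfolding lab_def symdiff_def by auto

lemma tokE_iff:
  assumes "A \<in> token_V V k" "B \<in> token_V V k"
  shows "{A,B} \<in> token_E V E k \<longleftrightarrow> symdiff A B \<in> E"
proof
  assume "{A,B} \<in> token_E V E k"
  then obtain A' B' where "{A,B} = {A',B'}" "symdiff A' B' \<in> E" unfolding token_E_def by blast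
  then show "symdiff A B \<in> E" by (metis doubleton_eq_iff sd_comm)
next
  assume "symdiff A B \<in> E" then show "{A,B} \<in> token_E V E k" using assms unfolding token_E_def by blast
qed

lemma tokE_elem:
  assumes "e \<in> token_E V E k"
  obtains A B where "e = {A,B}" "A \<in> token_V V k" "B \<in> token_V V k" "symdiff A B \<in> E"
  using assms unfolding token_E_def by blast

lemma cyc:
  assumes sq: "\<And>a b c d. distinct [a,b,c,d] \<Longrightarrow> {a,b}\<in>E \<Longrightarrow> {b,c}\<in>E \<Longrightarrow> {c,d}\<in>E \<Longrightarrow> {d,a}\<in>E \<Longrightarrow> {a,c}\<in>E"
    and c2: "\<forall>e\<in>E. card e = 2"
    and V: "P \<in> token_V V k" "Q \<in> token_V V k" "R \<in> token_V V k" "T \<in> token_V V k"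
    and ne: "P \<noteq> R" "Q \<noteq> T"
    and ed: "{P,Q} \<in> token_E V E k" "{Q,R} \<in> token_E V E k" "{R,T} \<in> token_E V E k" "{T,P} \<in> token_E V E k"
    and nd: "{P,R} \<notin> token_E V E k" "{Q,T} \<notin> token_E V E k"
  shows "symdiff P Q = symdiff R T"
proof (rule four_labels[OF sq c2])
  show "symdiff P Q \<in> E" "symdiff Q R \<in> E" "symdiff R T \<in> E" "symdiff T P \<in> E"
    using ed V tokE_iff by metis+
  show "symdiff P Q \<noteq> symdiff Q R" using ne(1) sd_trans[of P Q R] sd_empty by metis
  show "symdiff Q R \<noteq> symdiff R T" using ne(2) sd_trans[of Q R T] sd_empty by metis
  show "symdiff (symdiff P Q) (symdiff Q R) = symdiff (symdiff R T) (symdiff T P)"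
    by (simp add: sd_trans sd_comm[of P R])
  show "symdiff (symdiff P Q) (symdiff Q R) \<notin> E"
    using nd(1) V tokE_iff by (metis sd_trans)
  show "symdiff (symdiff Q R) (symdiff R T) \<notin> E"
    using nd(2) V tokE_iff by (metis sd_trans)
  show "a \<in> E \<Longrightarrow> a \<in> E" for a by simp
qed (auto)

definition sqp :: "'a set set \<Rightarrow> bool" where
  "sqp E \<longleftrightarrow> (\<forall>a b c d. distinct [a,b,c,d] \<longrightarrow> {a,b}\<in>E \<longrightarrow> {b,c}\<in>E \<longrightarrow> {c,d}\<in>E \<longrightarrow> {d,a}\<in>E \<longrightarrow> {a,c}\<in>E)"

lemma sqD: "sqp E \<Longrightarrow> distinct [a,b,c,d] \<Longrightarrow> {a,b}\<in>E \<Longrightarrow> {b,c}\<in>E \<Longrightarrow> {c,d}\<in>E \<Longrightarrow> {d,a}\<in>E \<Longrightarrow> {a,c}\<in>E"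
  unfolding sqp_def by blast

lemma ladder_adj_simp: "ladder_adj (s,i) (t,j) \<longleftrightarrow> (i = j \<and> s \<noteq> t) \<or> (s = t \<and> (j = Suc i \<or> i = Suc j))"
  unfolding ladder_adj_def by auto

lemma rung_step:
  assumes sqp: "sqp E"
    and c2: "\<forall>e\<in>E. card e = 2"
    and L: "induced_ladder (token_V V k) (token_E V E k) m \<phi>"
    and i: "Suc i \<le> m"
  shows "symdiff (\<phi> (False,i)) (\<phi> (True,i)) = symdiff (\<phi> (False, Suc i)) (\<phi> (True, Suc i))"
proof -
  let ?P = "\<phi> (False,i)" and ?Q = "\<phi> (True,i)" and ?R = "\<phi> (True,Suc i)" and ?T = "\<phi> (False,Suc i)"
  have inL: "(False,i) \<in> ladder_verts m" "(True,i) \<in> ladder_verts m" "(True,Suc i) \<in> ladder_verts m" "(False,Suc i) \<in> ladder_verts m"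
    using i unfolding ladder_verts_def by auto
  have inj: "inj_on \<phi> (ladder_verts m)" and img: "\<phi> ` ladder_verts m \<subseteq> token_V V k"
    and adj: "\<And>u v. u\<in>ladder_verts m \<Longrightarrow> v\<in>ladder_verts m \<Longrightarrow> {\<phi> u, \<phi> v} \<in> token_E V E k \<longleftrightarrow> ladder_adj u v"
    using L unfolding induced_ladder_def by auto
  have "symdiff ?P ?Q = symdiff ?R ?T"
  proof (rule cyc[OF sqD[OF sqp] c2])
    show "?P \<in> token_V V k" "?Q \<in> token_V V k" "?R \<in> token_V V k" "?T \<in> token_V V k" using img inL by auto
    show "?P \<noteq> ?R" using inj_onD[OF inj _ inL(1) inL(3)] by auto
    show "?Q \<noteq> ?T" using inj_onD[OF inj _ inL(2) inL(4)] by auto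
    show "{?P,?Q} \<in> token_E V E k" using adj[OF inL(1) inL(2)] by (simp add: ladder_adj_simp)
    show "{?Q,?R} \<in> token_E V E k" using adj[OF inL(2) inL(3)] by (simp add: ladder_adj_simp)
    show "{?R,?T} \<in> token_E V E k" using adj[OF inL(3) inL(4)] by (simp add: ladder_adj_simp)
    show "{?T,?P} \<in> token_E V E k" using adj[OF inL(4) inL(1)] by (simp add: ladder_adj_simp)
    show "{?P,?R} \<notin> token_E V E k" using adj[OF inL(1) inL(3)] by (simp add: ladder_adj_simp)
    show "{?Q,?T} \<notin> token_E V E k" using adj[OF inL(2) inL(4)] by (simp add: ladder_adj_simp)
  qed
  then show ?thesis by (simp add: sd_comm[of ?R])
qed

lemma alt_step:
  assumes sqp: "sqp E"
    and c2: "\<forall>e\<in>E. card e = 2"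
    and L: "induced_ladder (token_V V k) (token_E V E k) 1 \<phi>"
  shows "symdiff (\<phi> (False,0)) (\<phi> (False,1)) = symdiff (\<phi> (True, 0)) (\<phi> (True, 1))"
proof -
  let ?P = "\<phi> (False,0)" and ?Q = "\<phi> (False,1)" and ?R = "\<phi> (True,1)" and ?T = "\<phi> (True,0)"
  have inL: "(False,0) \<in> ladder_verts 1" "(False,1) \<in> ladder_verts 1" "(True,1) \<in> ladder_verts 1" "(True,0) \<in> ladder_verts 1"
    unfolding ladder_verts_def by auto
  have inj: "inj_on \<phi> (ladder_verts 1)" and img: "\<phi> ` ladder_verts 1 \<subseteq> token_V V k"
    and adj: "\<And>u v. u\<in>ladder_verts 1 \<Longrightarrow> v\<in>ladder_verts 1 \<Longrightarrow> {\<phi> u, \<phi> v} \<in> token_E V E k \<longleftrightarrow> ladder_adj u v"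
    using L unfolding induced_ladder_def by auto
  have "symdiff ?P ?Q = symdiff ?R ?T"
  proof (rule cyc[OF sqD[OF sqp] c2])
    show "?P \<in> token_V V k" "?Q \<in> token_V V k" "?R \<in> token_V V k" "?T \<in> token_V V k" using img inL by auto
    show "?P \<noteq> ?R" using inj_onD[OF inj _ inL(1) inL(3)] by auto
    show "?Q \<noteq> ?T" using inj_onD[OF inj _ inL(2) inL(4)] by auto
    show "{?P,?Q} \<in> token_E V E k" using adj[OF inL(1) inL(2)] by (simp add: ladder_adj_simp)
    show "{?Q,?R} \<in> token_E V E k" using adj[OF inL(2) inL(3)] by (simp add: ladder_adj_simp)
    show "{?R,?T} \<in> token_E V E k" using adj[OF inL(3) inL(4)] by (simp add: ladder_adj_simp)
    show "{?T,?P} \<in> token_E V E k" using adj[OF inL(4) inL(1)] by (simp add: ladder_adj_simp)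
    show "{?P,?R} \<notin> token_E V E k" using adj[OF inL(1) inL(3)] by (simp add: ladder_adj_simp)
    show "{?Q,?T} \<notin> token_E V E k" using adj[OF inL(2) inL(4)] by (simp add: ladder_adj_simp)
  qed
  then show ?thesis using sd_comm by metis
qed

lemma rungs_same:
  assumes sqp: "sqp E"
    and c2: "\<forall>e\<in>E. card e = 2"
    and L: "induced_ladder (token_V V k) (token_E V E k) m \<phi>"
  shows "i \<le> m \<Longrightarrow> symdiff (\<phi> (False,i)) (\<phi> (True,i)) = symdiff (\<phi> (False,0)) (\<phi> (True,0))"
proof (induction i)
  case 0 then show ?case by simp
next
  case (Suc i)
  then show ?case using rung_step[where E=E and V=V and k=k and m=m and \<phi>=\<phi> and i=i, OF sqp c2 L] by simp
qed

lemma ladder_lab: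
  assumes sqp: "sqp E"
    and c2: "\<forall>e\<in>E. card e = 2"
    and C: "connected_by_ladder (token_V V k) (token_E V E k) e1 e2"
  shows "lab e1 = lab e2"
proof -
  obtain m \<phi> where L: "induced_ladder (token_V V k) (token_E V E k) m \<phi>" and
    R: "(e1 \<in> ladder_rungs m \<phi> \<and> e2 \<in> ladder_rungs m \<phi>) \<or>
         (m = 1 \<and> e1 \<in> ladder_alt_rungs \<phi> \<and> e2 \<in> ladder_alt_rungs \<phi>)"
    using C unfolding connected_by_ladder_def by blast
  have rl: "lab e = symdiff (\<phi> (False,0)) (\<phi> (True,0))" if "e \<in> ladder_rungs m \<phi>" for e
  proof -
    from that obtain i where "e = {\<phi> (False, i), \<phi> (True, i)}" "i \<le> m" unfolding ladder_rungs_def by blast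
    then show ?thesis using rungs_same[where E=E and V=V and k=k and m=m and \<phi>=\<phi>, OF sqp c2 L] lab_pair by metis
  qed
  show ?thesis
  proof (cases "e1 \<in> ladder_rungs m \<phi> \<and> e2 \<in> ladder_rungs m \<phi>")
    case True then show ?thesis using rl by metis
  next
    case False
    then have m: "m = 1" and e: "e1 \<in> ladder_alt_rungs \<phi>" "e2 \<in> ladder_alt_rungs \<phi>" using R by auto
    have "lab e = symdiff (\<phi> (False,0)) (\<phi> (False,1))" if "e \<in> ladder_alt_rungs \<phi>" for e
    proof -
      from that have "e = {\<phi> (False,0), \<phi> (False,1)} \<or> e = {\<phi> (True,0), \<phi> (True,1)}"
        unfolding ladder_alt_rungs_def by simp
      then show ?thesis using alt_step[where E=E and V=V and k=k and \<phi>=\<phi>, OF sqp c2 L[unfolded m]] lab_pair by metis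
    qed
    then show ?thesis using e by metis
  qed
qed

lemma equiv_lab:
  assumes sqp: "sqp E"
    and c2: "\<forall>e\<in>E. card e = 2"
    and R: "(e1, e2) \<in> ladder_equiv (token_V V k) (token_E V E k)"
  shows "e2 \<in> token_E V E k \<and> lab e1 = lab e2"
proof -
  let ?r = "ladder_rel (token_V V k) (token_E V E k)"
  have st: "y \<in> token_E V E k \<and> z \<in> token_E V E k \<and> lab y = lab z" if "(y,z) \<in> ?r \<union> ?r\<inverse>" for y z
  proof -
    have cl: "lab y' = lab z'" if "connected_by_ladder (token_V V k) (token_E V E k) y' z'" for y' z'
      using ladder_lab[where E=E and V=V and k=k, OF sqp c2 that] .
    show ?thesis using that cl unfolding ladder_rel_def by auto
  qed
  show ?thesis
  proof (cases "(e1,e2) \<in> Id_on (token_E V E k)")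
    case True then show ?thesis by auto
  next
    case False
    then have "(e1,e2) \<in> (?r \<union> ?r\<inverse>)\<^sup>+" using R unfolding ladder_equiv_def by auto
    then show ?thesis
    proof (induction rule: trancl_induct)
      case (base y) then show ?case using st by blast
    next
      case (step y z) then show ?case using st by metis
    qed
  qed
qed

definition mv :: "'a set \<Rightarrow> 'a set set \<Rightarrow> ('a set \<times> 'a set) set" where
  "mv W E = {(X, insert y (X - {x})) | X x y. X \<subseteq> W \<and> x \<in> X \<and> y \<in> W \<and> y \<notin> X \<and> {x,y} \<in> E}"

lemma mvI: "X \<subseteq> W \<Longrightarrow> x \<in> X \<Longrightarrow> y \<in> W \<Longrightarrow> y \<notin> X \<Longrightarrow> {x,y} \<in> E \<Longrightarrow> Z = insert y (X - {x}) \<Longrightarrow> (X, Z) \<in> mv W E"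
  unfolding mv_def by blast

lemma reach_W:
  assumes "(p,y) \<in> {(x,y). {x,y} \<in> induced_E E W}\<^sup>*" "p \<in> W"
  shows "y \<in> W"
  using assms by (induction rule: rtrancl_induct) (auto simp: induced_E_def)

lemma mv_path:
  assumes c2: "\<forall>e\<in>E. card e = 2"
    and r: "(x,y) \<in> {(x,y). {x,y} \<in> induced_E E W}\<^sup>*"
  shows "X \<subseteq> W \<Longrightarrow> x \<in> X \<Longrightarrow> y \<notin> X \<Longrightarrow> (X, insert y (X - {x})) \<in> (mv W E)\<^sup>*"
  using r
proof (induction arbitrary: X rule: converse_rtrancl_induct)
  case base then show ?case by simp
next
  case (step x p)
  have e: "{x,p} \<in> E" "x \<in> W" "p \<in> W" using step.hyps(1) unfolding induced_E_def by auto
  have "card {x,p} = 2" using c2 e(1) by blast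
  then have xp: "x \<noteq> p" by (cases "x = p") auto
  have yW: "y \<in> W" using reach_W[OF step.hyps(2) e(3)] .
  show ?case
  proof (cases "p \<in> X")
    case True
    have 1: "(X, insert y (X - {p})) \<in> (mv W E)\<^sup>*" using step.IH[of X] step.prems True by blast
    have "(insert y (X - {p}), insert p (insert y (X - {p}) - {x})) \<in> mv W E"
      apply (rule mvI[OF _ _ e(3)]) using step.prems yW True xp e by auto
    moreover have "insert p (insert y (X - {p}) - {x}) = insert y (X - {x})"
      using step.prems True xp by auto
    ultimately show ?thesis using 1 by (metis rtrancl.rtrancl_into_rtrancl)
  next
    case False
    have m: "(X, insert p (X - {x})) \<in> mv W E"
      apply (rule mvI[OF _ _ e(3)]) using step.prems False e by auto
    show ?thesis
    proof (cases "p = y")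
      case True then show ?thesis using m by auto
    next
      case py: False
      have "(insert p (X - {x}), insert y (insert p (X - {x}) - {p})) \<in> (mv W E)\<^sup>*"
        apply (rule step.IH) using step.prems e py by auto
      moreover have "insert y (insert p (X - {x}) - {p}) = insert y (X - {x})" using False by auto
      ultimately show ?thesis using m by (metis converse_rtrancl_into_rtrancl)
    qed
  qed
qed

lemma mv_conn:
  assumes c2: "\<forall>e\<in>E. card e = 2"
    and conn: "connected_graph W (induced_E E W)" and fin: "finite W"
  shows "X \<subseteq> W \<Longrightarrow> Y \<subseteq> W \<Longrightarrow> card X = card Y \<Longrightarrow> (X,Y) \<in> (mv W E)\<^sup>*"
proof (induction "card (X - Y)" arbitrary: X rule: less_induct)
  case less
  show ?case
  proof (cases "X = Y")
    case True then show ?thesis by simp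
  next
    case False
    have fX: "finite X" "finite Y" using less.prems fin finite_subset by auto
    have "X - Y \<noteq> {}"
    proof
      assume "X - Y = {}"
      then have "X \<subseteq> Y" by auto
      then show False using card_subset_eq[OF fX(2)] less.prems False by auto
    qed
    then obtain x where x: "x \<in> X" "x \<notin> Y" by auto
    have "Y - X \<noteq> {}"
    proof
      assume "Y - X = {}"
      then have "Y \<subseteq> X" by auto
      then show False using card_subset_eq[OF fX(1)] less.prems False by auto
    qed
    then obtain y where y: "y \<in> Y" "y \<notin> X" by auto
    have xyW: "x \<in> W" "y \<in> W" using x y less.prems by auto
    have r: "(x,y) \<in> {(x,y). {x,y} \<in> induced_E E W}\<^sup>*" using conn xyW unfolding connected_graph_def by blast
    define X1 where "X1 = insert y (X - {x})"
    have 1: "(X, X1) \<in> (mv W E)\<^sup>*" unfolding X1_def using mv_path[OF c2 r] less.prems x y by blast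
    have X1W: "X1 \<subseteq> W" using less.prems xyW unfolding X1_def by auto
    have c0: "card X > 0" using fX(1) x(1) card_gt_0_iff by blast
    have "card X1 = Suc (card (X - {x}))" unfolding X1_def using fX y by simp
    then have cX1: "card X1 = card Y" using c0 x(1) fX(1) less.prems(3) by (simp add: card_Diff_singleton)
    have eq: "X1 - Y = (X - Y) - {x}" unfolding X1_def using y by auto
    have "card ((X - Y) - {x}) < card (X - Y)" by (rule card_Diff1_less) (use x fX in auto)
    then have "card (X1 - Y) < card (X - Y)" using eq by simp
    then have "(X1, Y) \<in> (mv W E)\<^sup>*" using less.hyps X1W less.prems cX1 by blast
    then show ?thesis using 1 by simp
  qed
qed

lemma mv_inv:
  assumes "(X,Y) \<in> (mv W E)\<^sup>*" "X \<subseteq> W" "finite W"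
  shows "Y \<subseteq> W \<and> card Y = card X"
  using assms(1)
proof (induction rule: rtrancl_induct)
  case base then show ?case using assms by simp
next
  case (step Y Z)
  then obtain x y where "Z = insert y (Y - {x})" "Y \<subseteq> W" "x \<in> Y" "y \<in> W" "y \<notin> Y"
    unfolding mv_def by blast
  moreover have "finite Y" using \<open>Y \<subseteq> W\<close> assms(3) finite_subset by auto
  ultimately show ?case using step.IH
  proof -
    assume a: "Z = insert y (Y - {x})" "Y \<subseteq> W" "x \<in> Y" "y \<in> W" "y \<notin> Y" "finite Y"
    have c0: "card Y > 0" using a card_gt_0_iff by blast
    have "card Z = Suc (card (Y - {x}))" using a by simp
    then have "card Z = card Y" using c0 a by (simp add: card_Diff_singleton)
    then show ?case using a step.IH by auto
  qed
qed

lemma sd_ins: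
  assumes "s \<notin> Y" "s' \<notin> Y'" "s \<notin> Y'" "s' \<notin> Y"
  shows "symdiff (insert s Y) (insert s' Y') = (if s = s' then {} else {s,s'}) \<union> symdiff Y Y'"
  using assms unfolding symdiff_def by auto

lemma ins_eq:
  assumes "s \<notin> Y" "s' \<notin> Y'" "s \<notin> Y'" "s' \<notin> Y" "insert s Y = insert s' Y'"
  shows "s = s' \<and> Y = Y'"
proof -
  have "s = s'" using assms by blast
  moreover have "Y = insert s Y - {s}" "Y' = insert s' Y' - {s'}" using assms by auto
  ultimately show ?thesis using assms(5) by metis
qed

lemma rung_mem: "i \<le> m \<Longrightarrow> {\<phi> (False,i), \<phi> (True,i)} \<in> ladder_rungs m \<phi>"
  unfolding ladder_rungs_def by blast

lemma mv_ladder: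
  assumes c2: "\<forall>e\<in>E. card e = 2"
    and ab: "{a,b} \<in> E" "a \<noteq> b" "a \<in> V" "b \<in> V"
    and W: "W = V - {a,b}" and fin: "finite V"
    and m: "(X,X') \<in> mv W E" and cX: "card X = k - 1" and k: "1 \<le> k"
  shows "({insert a X, insert b X}, {insert a X', insert b X'}) \<in> ladder_rel (token_V V k) (token_E V E k)"
proof -
  obtain x y where X': "X' = insert y (X - {x})" and XW: "X \<subseteq> W" and xy: "x \<in> X" "y \<in> W" "y \<notin> X" "{x,y} \<in> E"
    using m unfolding mv_def by blast
  have X'W: "X' \<subseteq> W" using X' XW xy by auto
  have fW: "finite W" using W fin by simp
  have fX: "finite X" "finite X'" using finite_subset[OF XW fW] finite_subset[OF X'W fW] by auto
  have cX': "card X' = card X"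
  proof -
    have c0: "card X > 0" using fX(1) xy(1) card_gt_0_iff by blast
    have "card X' = Suc (card (X - {x}))" using X' fX xy by simp
    then show ?thesis using c0 xy(1) fX(1) by (simp add: card_Diff_singleton)
  qed
  have abX: "a \<notin> X" "b \<notin> X" "a \<notin> X'" "b \<notin> X'" using XW X'W W by auto
  have xyab: "x \<noteq> a" "x \<noteq> b" "y \<noteq> a" "y \<noteq> b" "x \<noteq> y" using xy XW W by auto
  have sXX: "symdiff X X' = {x,y}" "symdiff X' X = {x,y}" "symdiff X X = {}" "symdiff X' X' = {}"
    using X' xy unfolding symdiff_def by auto
  define \<phi> where "\<phi> = (\<lambda>(s::bool, i::nat). insert (if s then b else a) (if i = 0 then X else X'))"
  have LV: "ladder_verts 1 = {(False,0),(False,1),(True,0),(True,1)}"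
    unfolding ladder_verts_def by auto
  have Y01: "\<And>i. i \<in> {0,1::nat} \<Longrightarrow> (if i = 0 then X else X') \<subseteq> W \<and> card (if i = 0 then X else X') = k - 1"
    using XW X'W cX cX' by auto
  have tv: "\<phi> u \<in> token_V V k" if "u \<in> ladder_verts 1" for u
  proof -
    obtain s i where u0: "u = (s,i)" by (cases u)
    have u: "u = (s,i)" "i \<in> {0,1}" using that u0 unfolding ladder_verts_def by auto
    let ?Y = "if i = 0 then X else X'"
    let ?c = "if s then b else a"
    have "?Y \<subseteq> W" "card ?Y = k - 1" using Y01[OF u(2)] by auto
    moreover have "?c \<notin> ?Y" "?c \<in> V" using abX ab by auto
    moreover have "finite ?Y" using fX by auto
    ultimately have "insert ?c ?Y \<subseteq> V" "card (insert ?c ?Y) = k" using W k by auto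
    then show ?thesis unfolding token_V_def \<phi>_def u by simp
  qed
  have sd: "symdiff (\<phi> (s,i)) (\<phi> (t,j)) = (if s = t then {} else {a,b}) \<union> (if i = j then {} else {x,y})"
    if "i \<in> {0,1}" "j \<in> {0,1}" for s t i j
  proof -
    have "symdiff (\<phi> (s,i)) (\<phi> (t,j)) = (if (if s then b else a) = (if t then b else a) then {} else {if s then b else a, if t then b else a}) \<union>
      symdiff (if i = 0 then X else X') (if j = 0 then X else X')"
      unfolding \<phi>_def prod.case by (rule sd_ins) (use abX in auto)
    then show ?thesis using that sXX ab(2) by (auto simp: insert_commute)
  qed
  have card4: "card {a,b,x,y} = 4" using xyab ab(2) by auto
  have nE4: "(({a,b} \<union> {x,y}) :: 'a set) \<notin> E"
  proof
    assume "{a,b} \<union> {x,y} \<in> E"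
    then have "card ({a,b} \<union> {x,y}) = 2" using c2 by blast
    moreover have "{a,b} \<union> {x,y} = {a,b,x,y}" by auto
    ultimately show False using card4 by simp
  qed
  have nE0: "({} :: 'a set) \<notin> E" using c2 by force
  have ba: "{b,a} \<in> E" using ab(1) by (simp add: insert_commute)
  have adj: "{\<phi> u, \<phi> v} \<in> token_E V E k \<longleftrightarrow> ladder_adj u v" if "u \<in> ladder_verts 1" "v \<in> ladder_verts 1" for u v
  proof -
    obtain s i where u0: "u = (s,i)" by (cases u)
    obtain t j where v0: "v = (t,j)" by (cases v)
    have uv: "u = (s,i)" "v = (t,j)" "i \<in> {0,1}" "j \<in> {0,1}" using that u0 v0 unfolding ladder_verts_def by auto
    have f1: "{\<phi> u, \<phi> v} \<in> token_E V E k \<longleftrightarrow> symdiff (\<phi> u) (\<phi> v) \<in> E" using tokE_iff tv that by blast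
    have ij: "i \<noteq> j \<longleftrightarrow> (j = Suc i \<or> i = Suc j)" using uv(3,4) by auto
    have "symdiff (\<phi> u) (\<phi> v) \<in> E \<longleftrightarrow> ladder_adj u v"
      unfolding uv(1,2) sd[OF uv(3,4)] ladder_adj_simp
    proof (cases "s = t"; cases "i = j")
      assume "s = t" "i = j" then show "((if s = t then {} else {a, b}) \<union> (if i = j then {} else {x, y}) \<in> E) = (i = j \<and> s \<noteq> t \<or> s = t \<and> (j = Suc i \<or> i = Suc j))"
        using nE0 by simp
    next
      assume "s = t" "i \<noteq> j" then show "((if s = t then {} else {a, b}) \<union> (if i = j then {} else {x, y}) \<in> E) = (i = j \<and> s \<noteq> t \<or> s = t \<and> (j = Suc i \<or> i = Suc j))"
        using xy(4) ij by simp
    next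
      assume "s \<noteq> t" "i = j" then show "((if s = t then {} else {a, b}) \<union> (if i = j then {} else {x, y}) \<in> E) = (i = j \<and> s \<noteq> t \<or> s = t \<and> (j = Suc i \<or> i = Suc j))"
        using ab(1) by simp
    next
      assume "s \<noteq> t" "i \<noteq> j" then show "((if s = t then {} else {a, b}) \<union> (if i = j then {} else {x, y}) \<in> E) = (i = j \<and> s \<noteq> t \<or> s = t \<and> (j = Suc i \<or> i = Suc j))"
        using nE4 by simp
    qed
    then show ?thesis using f1 by simp
  qed
  have inj: "inj_on \<phi> (ladder_verts 1)"
  proof (rule inj_onI)
    fix u v assume uv: "u \<in> ladder_verts 1" "v \<in> ladder_verts 1" "\<phi> u = \<phi> v"
    obtain s i where u0: "u = (s,i)" by (cases u)
    obtain t j where v0: "v = (t,j)" by (cases v)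
    have st: "u = (s,i)" "v = (t,j)" "i \<in> {0,1}" "j \<in> {0,1}" using uv(1,2) u0 v0 unfolding ladder_verts_def by auto
    have "\<phi> (s,i) = \<phi> (t,j)" using uv(3) st(1,2) by simp
    then have "symdiff (\<phi> (s,i)) (\<phi> (t,j)) = {}" by (simp only: sd_empty)
    then have z: "(if s = t then {} else {a,b}) \<union> (if i = j then {} else {x,y}) = {}"
      by (simp only: sd[OF st(3,4)])
    have "s = t" using z by (cases "s = t") auto
    moreover have "i = j" using z by (cases "i = j") auto
    ultimately show "u = v" using st by simp
  qed
  have L: "induced_ladder (token_V V k) (token_E V E k) 1 \<phi>"
    unfolding induced_ladder_def using inj tv adj by auto
  have r0: "{insert a X, insert b X} \<in> ladder_rungs 1 \<phi>"
  proof -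
    have "{insert a X, insert b X} = {\<phi> (False, 0), \<phi> (True, 0)}" unfolding \<phi>_def by simp
    then show ?thesis using rung_mem[of _ 1 \<phi>] by simp
  qed
  have r1: "{insert a X', insert b X'} \<in> ladder_rungs 1 \<phi>"
  proof -
    have "{insert a X', insert b X'} = {\<phi> (False, 1), \<phi> (True, 1)}" unfolding \<phi>_def by simp
    then show ?thesis using rung_mem[of _ 1 \<phi>] by simp
  qed
  have in0: "(False,0) \<in> ladder_verts 1" "(True,0) \<in> ladder_verts 1" "(False,1) \<in> ladder_verts 1" "(True,1) \<in> ladder_verts 1"
    using LV by auto
  have e0: "{insert a X, insert b X} \<in> token_E V E k"
    using adj[OF in0(1) in0(2)] unfolding \<phi>_def by (simp add: ladder_adj_simp)
  have e1: "{insert a X', insert b X'} \<in> token_E V E k"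
    using adj[OF in0(3) in0(4)] unfolding \<phi>_def by (simp add: ladder_adj_simp)
  show ?thesis unfolding ladder_rel_def connected_by_ladder_def using L r0 r1 e0 e1 by blast
qed

lemma sq_lemma:
  assumes "C4_free V E" "diamond_free V E" "\<forall>e\<in>E. e \<subseteq> V"
    and "distinct [a,b,c,d]" "{a,b}\<in>E" "{b,c}\<in>E" "{c,d}\<in>E" "{d,a}\<in>E"
  shows "{a,c}\<in>E"
proof (rule ccontr)
  assume n: "{a,c}\<notin>E"
  have V: "a\<in>V" "b\<in>V" "c\<in>V" "d\<in>V" using assms(3,5,7) by auto
  show False
  proof (cases "{b,d}\<in>E")
    case True
    have "distinct [b,c,d,a]" using assms(4) by auto
    moreover have "{a,b} \<in> E" "{c,a} \<notin> E" using assms(5) n by (auto simp: insert_commute)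
    ultimately show ?thesis using assms(2) V True assms(5-8) unfolding diamond_free_def
      by blast
  next
    case False
    then show ?thesis using assms(1) V n assms(4-8) unfolding C4_free_def by blast
  qed
qed

lemma cdiff: "finite A \<Longrightarrow> finite B \<Longrightarrow> card A = card B \<Longrightarrow> card (A - B) = card (B - A)"
  by (simp add: card_Diff_subset_Int Int_commute)

lemma orient:
  assumes f: "finite A" "finite B" and c: "card A = card B" and sd: "symdiff A B = {a,b}" and ab: "a \<noteq> b" and aA: "a \<in> A"
  shows "b \<notin> A \<and> a \<notin> B \<and> A = insert a (A - {a}) \<and> B = insert b (A - {a})"
proof -
  have aB: "a \<notin> B" using sd aA unfolding symdiff_def by blast
  have bA: "b \<notin> A"
  proof
    assume bA: "b \<in> A"
    then have "b \<notin> B" using sd unfolding symdiff_def by blast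
    have "A - B = {a,b}" using sd aA bA aB \<open>b \<notin> B\<close> unfolding symdiff_def by blast
    then have c1: "card (A - B) = 2" using ab by simp
    have "B - A = {}" using sd aA bA unfolding symdiff_def by blast
    then have c2: "card (B - A) = 0" by (metis card.empty)
    show False using cdiff[OF f c] c1 c2 by simp
  qed
  have bB: "b \<in> B" using sd bA unfolding symdiff_def by blast
  have oth: "t \<in> A \<longleftrightarrow> t \<in> B" if "t \<noteq> a" "t \<noteq> b" for t
    using sd that unfolding symdiff_def by blast
  have "B = insert b (A - {a})"
  proof (rule set_eqI)
    fix t show "t \<in> B \<longleftrightarrow> t \<in> insert b (A - {a})" using oth[of t] aB bB bA by auto
  qed
  then show ?thesis using aA aB bA by auto
qed

theorem lemma24:
  fixes V :: "'a set" and E :: "'a set set" and k :: nat and a b :: 'a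
  assumes "simple_graph V E"
    and "C4_free V E" and "diamond_free V E"
    and "1 \<le> k" and "k \<le> card V - 1"
    and "{a, b} \<in> E"
    and "connected_graph (V - {a, b}) (induced_E E (V - {a, b}))"
  shows "{{A, B} | A B. A \<in> token_V V k \<and> B \<in> token_V V k \<and> symdiff A B = {a, b}}
           \<in> ladder_classes (token_V V k) (token_E V E k)"
proof -
  define W where "W = V - {a,b}"
  define R where "R = ladder_equiv (token_V V k) (token_E V E k)"
  define eX where "eX X = {insert a X, insert b X}" for X
  have fin: "finite V" and Esub: "\<forall>e\<in>E. e \<subseteq> V" and c2: "\<forall>e\<in>E. card e = 2"
    using assms(1) unfolding simple_graph_def by auto
  have ab: "a \<noteq> b" "a \<in> V" "b \<in> V" using c2 assms(6) Esub by (auto simp: card_1_singleton_iff)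
  have sq: "sqp E" unfolding sqp_def using sq_lemma[OF assms(2,3) Esub] by blast
  have fW: "finite W" using fin W_def by simp
  have cW: "card W = card V - 2" unfolding W_def using fin ab by (simp add: card_Diff_subset)
  have kW: "k - 1 \<le> card W" using cW assms(4,5) by linarith
  obtain X0 where X0: "X0 \<subseteq> W" "card X0 = k - 1" using obtain_subset_with_card_n[OF kW] by blast
  have conn: "connected_graph W (induced_E E W)" using assms(7) W_def by simp
  have eTE: "eX X \<in> token_E V E k" and eTV: "insert a X \<in> token_V V k" "insert b X \<in> token_V V k"
    and elab: "lab (eX X) = {a,b}"
    if "X \<subseteq> W" "card X = k - 1" for X
  proof -
    have fX: "finite X" using that fW finite_subset by auto
    have nab: "a \<notin> X" "b \<notin> X" using that W_def by auto
    show tA: "insert a X \<in> token_V V k" "insert b X \<in> token_V V k"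
      unfolding token_V_def using that fX nab ab assms(4) W_def by auto
    have sdab: "symdiff (insert a X) (insert b X) = {a,b}" using nab ab unfolding symdiff_def by auto
    show "eX X \<in> token_E V E k" unfolding eX_def using tokE_iff[OF tA] sdab assms(6) by simp
    show "lab (eX X) = {a,b}" unfolding eX_def lab_pair sdab ..
  qed
  have reach: "(eX X0, eX X) \<in> R" if X: "X \<subseteq> W" "card X = k - 1" for X
  proof -
    have "(X0, X) \<in> (mv W E)\<^sup>*" using mv_conn[OF c2 conn fW] X0 X by simp
    then have "(eX X0, eX X) \<in> (ladder_rel (token_V V k) (token_E V E k))\<^sup>*"
    proof (induction rule: rtrancl_induct)
      case base then show ?case by simp
    next
      case (step Y Z)
      have "Y \<subseteq> W \<and> card Y = card X0" using mv_inv[OF step.hyps(1) X0(1) fW] .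
      then have "(eX Y, eX Z) \<in> ladder_rel (token_V V k) (token_E V E k)"
        unfolding eX_def using mv_ladder[OF c2 assms(6) ab(1-3) W_def fin step.hyps(2)] X0(2) assms(4) by simp
      then show ?case using step.IH by simp
    qed
    then consider "eX X0 = eX X" | "(eX X0, eX X) \<in> (ladder_rel (token_V V k) (token_E V E k))\<^sup>+"
      by (meson rtranclD)
    then show ?thesis
    proof cases
      case 1 then show ?thesis unfolding R_def ladder_equiv_def using eTE[OF X0] by auto
    next
      case 2
      have "(eX X0, eX X) \<in>
        (ladder_rel (token_V V k) (token_E V E k) \<union> (ladder_rel (token_V V k) (token_E V E k))\<inverse>)\<^sup>+"
        by (rule trancl_mono[OF 2]) auto
      then show ?thesis unfolding R_def ladder_equiv_def by blast
    qed
  qed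
  let ?S = "{{A, B} | A B. A \<in> token_V V k \<and> B \<in> token_V V k \<and> symdiff A B = {a, b}}"
  have "?S = R `` {eX X0}"
  proof
    show "?S \<subseteq> R `` {eX X0}"
    proof
      fix e assume "e \<in> ?S"
      then obtain A B where e: "e = {A,B}" "A \<in> token_V V k" "B \<in> token_V V k" "symdiff A B = {a,b}" by blast
      have fAB: "finite A" "finite B" "A \<subseteq> V" "B \<subseteq> V" "card A = k" "card B = k"
        using e fin finite_subset unfolding token_V_def by auto
      have gen: "\<exists>X. X \<subseteq> W \<and> card X = k - 1 \<and> {P,Q} = eX X"
        if "finite P" "finite Q" "P \<subseteq> V" "Q \<subseteq> V" "card P = k" "card Q = k" "symdiff P Q = {a,b}" "a \<in> P" for P Q
      proof -
        have o: "b \<notin> P \<and> a \<notin> Q \<and> P = insert a (P - {a}) \<and> Q = insert b (P - {a})"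
          using orient[of P Q a b] that ab(1) by simp
        have "P - {a} \<subseteq> W" using o that W_def by auto
        moreover have "card (P - {a}) = k - 1" using that by simp
        moreover have "{P,Q} = eX (P - {a})" unfolding eX_def using o by metis
        ultimately show ?thesis by blast
      qed
      have "\<exists>X. X \<subseteq> W \<and> card X = k - 1 \<and> e = eX X"
      proof (cases "a \<in> A")
        case True then show ?thesis using gen[of A B] fAB e by simp
      next
        case False
        then have "a \<in> B" using e(4) unfolding symdiff_def by blast
        then show ?thesis using gen[of B A] fAB e sd_comm[of A B] by (simp add: insert_commute)
      qed
      then obtain X where "X \<subseteq> W" "card X = k - 1" "e = eX X" by blast
      then show "e \<in> R `` {eX X0}" using reach by simp
    qed
  next
    show "R `` {eX X0} \<subseteq> ?S"
    proof
      fix e assume "e \<in> R `` {eX X0}"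
      then have "(eX X0, e) \<in> ladder_equiv (token_V V k) (token_E V E k)" unfolding R_def by simp
      then have el: "e \<in> token_E V E k" "lab (eX X0) = lab e" using equiv_lab[OF sq c2] by auto
      obtain A B where "e = {A,B}" "A \<in> token_V V k" "B \<in> token_V V k" using tokE_elem[OF el(1)] by metis
      moreover have "symdiff A B = {a,b}" using el elab[OF X0] calculation(1) lab_pair by metis
      ultimately show "e \<in> ?S" by blast
    qed
  qed
  then show ?thesis unfolding ladder_classes_def R_def using quotientI[OF eTE[OF X0]] by simp
qed

end
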